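(* Let $r\in\mathbb{N}$ and $\mathrm{Re}(z)>0$. For any integers $M_l\ge 0$ ($0\le l\le r-1$), \begin{multline*} \zeta_r(s,z)=\sum_{l=0}^{r-1}\frac{P^l_r(z)}{s-l-1}z^{-s+l+1}+\frac12\sum_{l=0}^{r-1}P^l_r(z)z^{-s+l}+\sum_{l=0}^{r-1}P^l_r(z)\sum_{k_l=1}^{M_l}\frac{B_{k_l+1}}{(k_l+1)!}(s-l)_{k_l}z^{-s+l-k_l}\\ -\sum_{l=0}^{r-1}\frac{P^l_r(z)(s-l)_{M_l+1}}{(M_l+1)!}\int_0^\infty\widetilde{B}_{M_l+1}(x)(x+z)^{-s+l-M_l-1}\,dx, \end{multline*} and this expression gives an analytic continuation of $\zeta_r(s,z)$ to the region $\mathrm{Re}(s)>M$, where $M:=\max\{-M_l+l\mid 0\le l\le r-1\}$.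
   Context: $\zeta_r(s,z):=\sum_{n_1,\ldots,n_r\ge0}(n_1+\cdots+n_r+z)^{-s}$ for $\mathrm{Re}(s)>r$. $(x)_l:=x(x+1)\cdots(x+l-1)$ (with $(x)_0=1$), and the Stirling numbers of the first kind $s(l,j)$ are defined by $(x)_l=\sum_{j=0}^l s(l,j)x^j$. For $0\le l\le r-1$, $P^l_r(z):=\frac{1}{(r-1)!}\sum_{j=l}^{r-1}\binom{j}{l}s(r,j+1)(-z)^{j-l}$. $B_k$ are the Bernoulli numbers, $B_k(x)$ the Bernoulli polynomials, and $\widetilde{B}_k(x):=B_k(x-\lfloor x\rfloor)$ the periodic Bernoulli functions. Complex powers use the principal branch. *)

theory Defs
  imports "HOL-Analysis.Analysis" "HOL-Combinatorics.Stirling"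
begin

text \<open>Bernoulli numbers with the convention B_1 = -1/2:
  B_0 = 1 and sum_{k=0}^{n} (n+1 choose k) B_k = 0 for n >= 1.\<close>
fun bernoulli :: "nat \<Rightarrow> real" where
  "bernoulli 0 = 1"
| "bernoulli (Suc n) =
     - (\<Sum>k<Suc n. real (Suc (Suc n) choose k) * bernoulli k) / real (Suc (Suc n))"

definition bernpoly :: "nat \<Rightarrow> real \<Rightarrow> real" where
  "bernpoly n x = (\<Sum>k\<le>n. real (n choose k) * bernoulli k * x ^ (n - k))"

definition pbernpoly :: "nat \<Rightarrow> real \<Rightarrow> real" where
  "pbernpoly n x = bernpoly n (x - of_int \<lfloor>x\<rfloor>)"

text \<open>Barnes zeta function zeta_r(s,z) = sum over (n_1,...,n_r) in N^r of
  (n_1+...+n_r+z)^(-s) (meaningful for Re s > r).\<close>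
definition barnes_zeta :: "nat \<Rightarrow> complex \<Rightarrow> complex \<Rightarrow> complex" where
  "barnes_zeta r s z =
     (\<Sum>\<^sub>\<infinity>ns\<in>{ns :: nat list. length ns = r}. (of_nat (sum_list ns) + z) powr (- s))"

text \<open>P^l_r(z) = 1/(r-1)! sum_{j=l}^{r-1} (j choose l) s(r,j+1) (-z)^(j-l),
  where s(l,j) are the (unsigned) Stirling numbers of the first kind,
  (x)_l = sum_j s(l,j) x^j (library: stirling, cf. stirling_pochhammer).\<close>
definition P_coef :: "nat \<Rightarrow> nat \<Rightarrow> complex \<Rightarrow> complex" where
  "P_coef r l z = (1 / fact (r - 1)) *
     (\<Sum>j=l..r-1. of_nat (j choose l) * of_nat (stirling r (j + 1)) * (- z) ^ (j - l))"

end

theory Submission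
  imports Defs "HOL-Complex_Analysis.Complex_Analysis"
begin


definition cbp :: "nat \<Rightarrow> complex \<Rightarrow> complex" where
  "cbp n u = (\<Sum>k\<le>n. of_real (real (n choose k) * bernoulli k) * u ^ (n - k))"

lemma cbp_of_real: "cbp n (of_real t) = of_real (bernpoly n t)"
  by (simp add: cbp_def bernpoly_def)

lemma bernoulli_sum_zero:
  assumes "n \<ge> 2"
  shows "(\<Sum>k<n. real (n choose k) * bernoulli k) = 0"
proof -
  obtain m where m: "n = Suc (Suc m)" using assms by (metis add_2_eq_Suc le_Suc_ex)
  have "(\<Sum>k<n. real (n choose k) * bernoulli k)
     = (\<Sum>k<Suc m. real (n choose k) * bernoulli k) + real n * bernoulli (Suc m)"
    by (simp add: m)
  also have "real n * bernoulli (Suc m) = - (\<Sum>k<Suc m. real (n choose k) * bernoulli k)"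
    by (simp add: m del: sum.lessThan_Suc)
  finally show ?thesis by simp
qed

lemma cbp_0: "cbp n 0 = of_real (bernoulli n)"
proof -
  have "cbp n 0 = (\<Sum>k\<le>n. if k = n then of_real (bernoulli n) else 0)"
    unfolding cbp_def by (intro sum.cong) auto
  also have "\<dots> = of_real (bernoulli n)" by simp
  finally show ?thesis .
qed

lemma cbp_1: "cbp n 1 = of_real (bernoulli n) + (if n = 1 then 1 else 0)"
proof -
  have "cbp n 1 = of_real (\<Sum>k\<le>n. real (n choose k) * bernoulli k)"
    unfolding cbp_def by simp
  also have "(\<Sum>k\<le>n. real (n choose k) * bernoulli k) = (\<Sum>k<n. real (n choose k) * bernoulli k) + bernoulli n"
    by (simp add: lessThan_Suc_atMost[symmetric])
  finally have *: "cbp n 1 = of_real ((\<Sum>k<n. real (n choose k) * bernoulli k) + bernoulli n)" .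
  consider "n = 0" | "n = 1" | "n \<ge> 2" by linarith
  then show ?thesis
  proof cases
    case 1 then show ?thesis by (simp add: cbp_def)
  next
    case 2 then show ?thesis by (simp add: cbp_def)
  next
    case 3 then show ?thesis using * bernoulli_sum_zero[OF 3] by simp
  qed
qed

lemma DERIV_cpow: "((\<lambda>x::complex. x ^ n) has_field_derivative of_nat n * x ^ (n - Suc 0)) (at x)"
  using DERIV_power[OF DERIV_ident, of n x UNIV] by simp

lemma cbp_deriv:
  "(cbp (Suc n) has_field_derivative (of_nat (Suc n) * cbp n u)) (at u)"
proof -
  have "(cbp (Suc n) has_field_derivative
      (\<Sum>k\<le>Suc n. of_real (real (Suc n choose k) * bernoulli k) * (of_nat (Suc n - k) * u ^ (Suc n - k - Suc 0)))) (at u)"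
    unfolding cbp_def[abs_def]
    by (intro DERIV_sum DERIV_cmult DERIV_cpow)
  also have "(\<Sum>k\<le>Suc n. of_real (real (Suc n choose k) * bernoulli k) * (of_nat (Suc n - k) * u ^ (Suc n - k - Suc 0)))
      = (\<Sum>k\<le>n. of_real (real (Suc n choose k) * bernoulli k) * (of_nat (Suc n - k) * u ^ (Suc n - k - Suc 0)))"
    by (subst sum.atMost_Suc) simp
  also have "\<dots> = (\<Sum>k\<le>n. of_nat (Suc n) * (of_real (real (n choose k) * bernoulli k) * u ^ (n - k)))"
  proof (intro sum.cong refl)
    fix k assume k: "k \<in> {..n}"
    have "(Suc n - k) * (Suc n choose k) = Suc n * (n choose k)"
      using binomial_absorb_comp[of "Suc n" k] by simp
    then have "real (Suc n - k) * real (Suc n choose k) = real (Suc n) * real (n choose k)"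
      by (metis of_nat_mult)
    then have "(of_nat (Suc n - k) :: complex) * of_nat (Suc n choose k) = of_nat (Suc n) * of_nat (n choose k)"
      by (metis of_nat_mult of_nat_eq_iff)
    have eq: "Suc n - k - Suc 0 = n - k" by simp
    have "of_real (real (Suc n choose k) * bernoulli k) * (of_nat (Suc n - k) * u ^ (Suc n - k - Suc 0))
        = of_real (bernoulli k) * u ^ (n - k) * ((of_nat (Suc n - k) :: complex) * of_nat (Suc n choose k))"
      by (simp only: of_real_mult of_real_of_nat_eq eq ac_simps)
    also have "\<dots> = of_real (bernoulli k) * u ^ (n - k) * (of_nat (Suc n) * of_nat (n choose k))"
      by (simp only: \<open>(of_nat (Suc n - k) :: complex) * of_nat (Suc n choose k) = of_nat (Suc n) * of_nat (n choose k)\<close>)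
    also have "\<dots> = of_nat (Suc n) * (of_real (real (n choose k) * bernoulli k) * u ^ (n - k))"
      by (simp only: of_real_mult of_real_of_nat_eq ac_simps)
    finally show "of_real (real (Suc n choose k) * bernoulli k) * (of_nat (Suc n - k) * u ^ (Suc n - k - Suc 0))
        = of_nat (Suc n) * (of_real (real (n choose k) * bernoulli k) * u ^ (n - k))" .
  qed
  also have "\<dots> = of_nat (Suc n) * cbp n u"
    by (simp add: cbp_def sum_distrib_left)
  finally show ?thesis .
qed

definition CB :: "nat \<Rightarrow> real" where
  "CB n = (\<Sum>k\<le>n. real (n choose k) * \<bar>bernoulli k\<bar>)"

lemma CB_nonneg: "CB n \<ge> 0"
  unfolding CB_def by (intro sum_nonneg) auto

lemma bernpoly_bound:
  assumes "0 \<le> t" "t \<le> 1"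
  shows "\<bar>bernpoly n t\<bar> \<le> CB n"
proof -
  have "\<bar>bernpoly n t\<bar> \<le> (\<Sum>k\<le>n. \<bar>real (n choose k) * bernoulli k * t ^ (n - k)\<bar>)"
    unfolding bernpoly_def by (rule sum_abs)
  also have "\<dots> \<le> (\<Sum>k\<le>n. real (n choose k) * \<bar>bernoulli k\<bar>)"
  proof (intro sum_mono)
    fix k
    have "\<bar>t ^ (n - k)\<bar> \<le> 1" using assms by (simp add: power_abs power_le_one)
    then show "\<bar>real (n choose k) * bernoulli k * t ^ (n - k)\<bar> \<le> real (n choose k) * \<bar>bernoulli k\<bar>"
      by (simp add: abs_mult mult_left_le)
  qed
  finally show ?thesis unfolding CB_def .
qed

lemma pbernpoly_bound: "\<bar>pbernpoly n x\<bar> \<le> CB n"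
  unfolding pbernpoly_def
  by (rule bernpoly_bound) (auto simp: floor_le_iff less_imp_le  frac_lt_1[unfolded frac_def])



definition Tt :: "nat \<Rightarrow> complex \<Rightarrow> complex \<Rightarrow> complex \<Rightarrow> complex" where
  "Tt j w a u = cbp j u / fact j * pochhammer w j * (u + a) powr (- w - of_nat j)"

definition Phi :: "nat \<Rightarrow> complex \<Rightarrow> complex \<Rightarrow> complex \<Rightarrow> complex" where
  "Phi p w a u = (\<Sum>j<p. cbp (Suc j) u / fact (Suc j) * pochhammer w j * (u + a) powr (- w - of_nat j))
      - (u + a) powr (1 - w) / (1 - w)"

lemma cbp_zero [simp]: "cbp 0 u = 1"
  by (simp add: cbp_def)

lemma powr_shift_deriv:
  fixes u a e :: complex
  assumes "u + a \<notin> \<real>\<^sub>\<le>\<^sub>0"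
  shows "((\<lambda>u. (u + a) powr e) has_field_derivative e * (u + a) powr (e - 1)) (at u)"
proof -
  have "((\<lambda>u. u + a) has_field_derivative 1) (at u)"
    using DERIV_add[OF DERIV_ident DERIV_const[of a]] by simp
  from DERIV_chain2[OF has_field_derivative_powr[OF assms] this] show ?thesis by simp
qed

lemma Phi_term_deriv:
  fixes u a w :: complex
  assumes "u + a \<notin> \<real>\<^sub>\<le>\<^sub>0"
  shows "((\<lambda>u. cbp (Suc j) u / fact (Suc j) * pochhammer w j * (u + a) powr (- w - of_nat j))
     has_field_derivative (Tt j w a u - Tt (Suc j) w a u)) (at u)"
proof -
  have ne: "u + a \<noteq> 0" using assms by auto
  have d1: "((\<lambda>u. cbp (Suc j) u / fact (Suc j) * pochhammer w j) has_field_derivative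
      of_nat (Suc j) * cbp j u / fact (Suc j) * pochhammer w j) (at u)"
    by (intro DERIV_cmult_right DERIV_cdivide cbp_deriv)
  have "((\<lambda>u. cbp (Suc j) u / fact (Suc j) * pochhammer w j * (u + a) powr (- w - of_nat j))
     has_field_derivative
      (of_nat (Suc j) * cbp j u / fact (Suc j) * pochhammer w j * (u + a) powr (- w - of_nat j)
       + ((- w - of_nat j) * (u + a) powr (- w - of_nat j - 1)) * (cbp (Suc j) u / fact (Suc j) * pochhammer w j))) (at u)"
    by (rule DERIV_mult[OF d1 powr_shift_deriv[OF assms]])
  moreover have "of_nat (Suc j) * cbp j u / fact (Suc j) * pochhammer w j * (u + a) powr (- w - of_nat j)
       + ((- w - of_nat j) * (u + a) powr (- w - of_nat j - 1)) * (cbp (Suc j) u / fact (Suc j) * pochhammer w j)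
     = Tt j w a u - Tt (Suc j) w a u"
  proof -
    have e: "(u + a) powr (- w - of_nat (Suc j)) = (u + a) powr (- w - of_nat j - 1)"
      by (simp add: algebra_simps)
    show ?thesis
      unfolding Tt_def e pochhammer_rec' fact_Suc
      by (simp add: field_simps del: of_nat_Suc)
  qed
  ultimately show ?thesis by (rule DERIV_cong)
qed

lemma Phi_deriv:
  fixes u a w :: complex
  assumes "u + a \<notin> \<real>\<^sub>\<le>\<^sub>0" "w \<noteq> 1"
  shows "(Phi p w a has_field_derivative - Tt p w a u) (at u)"
proof -
  have ne: "u + a \<noteq> 0" using assms by auto
  have w1: "1 - w \<noteq> 0" using assms by auto
  have "(Phi p w a has_field_derivative
      (\<Sum>j<p. Tt j w a u - Tt (Suc j) w a u) - ((1 - w) * (u + a) powr (1 - w - 1)) / (1 - w)) (at u)"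
    unfolding Phi_def[abs_def]
    by (intro DERIV_diff DERIV_sum DERIV_cdivide Phi_term_deriv powr_shift_deriv assms)
  moreover have "(\<Sum>j<p. Tt j w a u - Tt (Suc j) w a u) - ((1 - w) * (u + a) powr (1 - w - 1)) / (1 - w) = - Tt p w a u"
    using w1 sum_lessThan_telescope'[of "\<lambda>j. Tt j w a u" p] by (simp add: Tt_def)
  ultimately show ?thesis by (rule DERIV_cong)
qed

lemma Phi_integral:
  assumes "Re a > 0" "w \<noteq> 1"
  shows "((\<lambda>t. Tt p w a (of_real t)) has_integral (Phi p w a 0 - Phi p w a 1)) {0..1}"
proof -
  have "((\<lambda>t. - Tt p w a (of_real t)) has_integral (Phi p w a (of_real 1) - Phi p w a (of_real 0))) {0..1}"
  proof (rule fundamental_theorem_of_calculus)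
    fix t :: real assume t: "t \<in> {0..1}"
    have "of_real t + a \<notin> \<real>\<^sub>\<le>\<^sub>0" using t assms
      by (auto simp: nonpos_Reals_def complex_eq_iff)
    then show "((\<lambda>t. Phi p w a (of_real t)) has_vector_derivative - Tt p w a (of_real t)) (at t within {0..1})"
      by (intro has_vector_derivative_real_field Phi_deriv assms)
  qed simp
  from has_integral_neg[OF this] show ?thesis by simp
qed

definition Gf :: "nat \<Rightarrow> complex \<Rightarrow> complex \<Rightarrow> complex" where
  "Gf p w a = (\<Sum>j<p. of_real (bernoulli (Suc j)) / fact (Suc j) * pochhammer w j * a powr (- w - of_nat j))
      - a powr (1 - w) / (1 - w)"

lemma Phi_0: "Phi p w a 0 = Gf p w a"
  by (simp add: Phi_def Gf_def cbp_0)

lemma Phi_1: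
  assumes "p \<ge> 1"
  shows "Phi p w a 1 = Gf p w (1 + a) + (1 + a) powr (- w)"
proof -
  have "Phi p w a 1 = (\<Sum>j<p. of_real (bernoulli (Suc j)) / fact (Suc j) * pochhammer w j * (1 + a) powr (- w - of_nat j)
       + (if j = 0 then (1 + a) powr (- w) else 0)) - (1 + a) powr (1 - w) / (1 - w)"
    unfolding Phi_def cbp_1
    by (intro arg_cong2[where f = "(-)"] sum.cong refl) (auto simp: add.commute)
  also have "\<dots> = Gf p w (1 + a) + (1 + a) powr (- w)"
    using assms by (simp add: sum.distrib Gf_def)
  finally show ?thesis .
qed



lemma norm_powr_bound: "norm (X powr e) \<le> exp (\<bar>Im e\<bar> * pi) * norm X powr Re e"
proof -
  have "- Im e * Arg X \<le> \<bar>Im e\<bar> * pi"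
  proof -
    have "- Im e * Arg X \<le> \<bar>Im e\<bar> * \<bar>Arg X\<bar>"
      by (metis abs_ge_minus_self abs_mult abs_ge_self mult_minus_left order_trans)
    also have "\<dots> \<le> \<bar>Im e\<bar> * pi"
      using Arg_bounded[of X] by (intro mult_left_mono) auto
    finally show ?thesis .
  qed
  then have "exp (- Im e * Arg X) \<le> exp (\<bar>Im e\<bar> * pi)" by simp
  then show ?thesis
    unfolding norm_powr_complex
    by (simp add: mult.commute mult_left_mono)
qed

lemma norm_shift_powr_bound:
  assumes "x \<ge> 0" "Re z > 0" "Re e \<le> 0"
  shows "norm ((of_real x + z) powr e) \<le> exp (\<bar>Im e\<bar> * pi) * (x + Re z) powr Re e"
proof -
  have "x + Re z \<le> norm (of_real x + z)"
    using complex_Re_le_cmod[of "of_real x + z"] by simp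
  then have "norm (of_real x + z) powr Re e \<le> (x + Re z) powr Re e"
    using assms by (intro powr_mono2') auto
  then show ?thesis
    using norm_powr_bound[of "of_real x + z" e] by (meson exp_ge_zero mult_left_mono order_trans)
qed

lemma cont_shift_powr:
  assumes "Re a > 0" "S \<subseteq> {0..}"
  shows "continuous_on S (\<lambda>t::real. (of_real t + a) powr e)"
proof (rule continuous_on_powr_complex)
  show "S \<subseteq> {t. 0 \<le> Re (of_real t + a) \<or> Im (of_real t + a) \<noteq> 0}"
    using assms by auto
  show "\<And>t. t \<in> S \<Longrightarrow> of_real t + a = 0 \<Longrightarrow> 0 < Re e"
    using assms by (auto simp: complex_eq_iff)
qed (auto intro!: continuous_intros)

lemma cont_bernpoly: "continuous_on S (\<lambda>t. of_real (bernpoly p t) :: complex)"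
  unfolding bernpoly_def by (intro continuous_intros)

lemma piece_integral:
  fixes z e :: complex and k p :: nat
  assumes "Re z > 0"
  defines "f \<equiv> (\<lambda>t. of_real (bernpoly p t) * (of_real t + (of_nat k + z)) powr e)"
  shows "((\<lambda>x. of_real (pbernpoly p x) * (of_real x + z) powr e) has_integral integral {0..1} f)
           {real k..real k + 1}"
proof -
  have "continuous_on {0..1} f"
    unfolding f_def using assms
    by (intro continuous_intros cont_bernpoly cont_shift_powr) auto
  then have "(f has_integral integral {0..1} f) {0..1}"
    by (intro integrable_integral integrable_continuous_interval)
  from has_integral_shift_real_ivl[OF this, of "- real k"]
  have sh: "((\<lambda>x. f (x - real k)) has_integral integral {0..1} f) {real k..real k + 1}"
    by (simp add: add.commute)
  show ?thesis
  proof (rule has_integral_spike_finite[OF _ _ sh])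
    show "finite {real k + 1}" by simp
  next
    fix x assume x: "x \<in> {real k..real k + 1} - {real k + 1}"
    then have "\<lfloor>x\<rfloor> = int k" by (auto simp: floor_eq_iff)
    then show "of_real (pbernpoly p x) * (of_real x + z) powr e = f (x - real k)"
      unfolding f_def pbernpoly_def by (simp add: algebra_simps)
  qed
qed



lemma shift_powr_integrable:
  fixes c q :: real assumes c: "c > 0" and q: "q < -1"
  shows "(\<lambda>x. (x + c) powr q) integrable_on {0..}"
proof -
  define H where "H \<equiv> \<lambda>y::real. (y + c) powr (q + 1) / (q + 1)"
  have "((\<lambda>x. (x + c) powr q) has_integral (0 - H 0)) {0..}"
  proof (rule has_integral_to_inf)
    fix y :: real
    show "(\<lambda>x. (x + c) powr q) integrable_on {0..y}"
      using c by (intro integrable_continuous_interval continuous_intros) auto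
  next
    have q1: "q + 1 \<noteq> 0" using q by simp
    have "((\<lambda>x. (x + c) powr q) has_integral (H y - H 0)) {0..y}" if "y \<ge> 0" for y
      unfolding H_def using c q that q1
      by (intro fundamental_theorem_of_calculus)
         (auto intro!: derivative_eq_intros simp flip: has_real_derivative_iff_has_vector_derivative
               simp: q1)
    then have "\<forall>\<^sub>F y in at_top. integral {0..y} (\<lambda>x. (x + c) powr q) = H y - H 0"
      by (meson eventually_at_top_linorderI integral_unique)
    moreover have "((\<lambda>y. H y - H 0) \<longlongrightarrow> 0 - H 0) at_top"
    proof -
      have "filterlim (\<lambda>y::real. c + y) at_top at_top"
        by (rule filterlim_tendsto_add_at_top[OF tendsto_const filterlim_ident])
      then have "filterlim (\<lambda>y::real. y + c) at_top at_top" by (simp add: add.commute)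
      then have "((\<lambda>y. (y + c) powr (q + 1)) \<longlongrightarrow> 0) at_top"
        using q by (intro tendsto_neg_powr) auto
      then have "((\<lambda>y. H y) \<longlongrightarrow> 0) at_top"
        unfolding H_def by (auto intro: tendsto_divide_zero)
      then show ?thesis by (intro tendsto_diff tendsto_const)
    qed
    ultimately show "((\<lambda>y. integral {0..y} (\<lambda>x. (x + c) powr q)) \<longlongrightarrow> 0 - H 0) at_top"
      by (simp add: filterlim_cong)
  next
    fix y :: real assume "y \<ge> 0" then show "(y + c) powr q \<ge> 0" by simp
  qed
  then show ?thesis by blast
qed

lemma INT:
  fixes z e :: complex and p :: nat
  assumes z: "Re z > 0" and e: "Re e < -1"
  defines "g \<equiv> \<lambda>x. of_real (pbernpoly p x) * (of_real x + z) powr e"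
  defines "K \<equiv> \<lambda>k. integral {0..1} (\<lambda>t. of_real (bernpoly p t) * (of_real t + (of_nat k + z)) powr e)"
  shows "g integrable_on {0..}" "K sums integral {0..} g"
proof -
  have HI: "(g has_integral (\<Sum>k<N. K k)) {0..real N}" for N
  proof (induction N)
    case 0
    then show ?case using has_integral_refl(1)[of g 0] by (simp add: cbox_interval)
  next
    case (Suc N)
    have "(g has_integral (\<Sum>k<N. K k) + K N) {0..real N + 1}"
      using has_integral_combine[of 0 "real N" "real N + 1" g "\<Sum>k<N. K k" "K N"] Suc
        piece_integral[of z p e N] z unfolding g_def K_def by simp
    then show ?case by (simp add: add.commute)
  qed
  define C where "C = CB p * exp (\<bar>Im e\<bar> * pi)"
  define h where "h \<equiv> \<lambda>x. C * (x + Re z) powr Re e"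
  have hint: "h integrable_on {0..}"
    unfolding h_def using integrable_cmul[OF shift_powr_integrable[of "Re z" "Re e"], of C] z e
    by simp
  define fN where "fN \<equiv> \<lambda>N x. (if x \<in> {..real N} then g x else 0)"
  have set_eq: "{..real N} \<inter> {0..} = {0..real N}" for N by auto
  have fNint: "fN N integrable_on {0..}" for N
    unfolding fN_def integrable_restrict_Int set_eq using HI by blast
  have fNintegral: "integral {0..} (fN N) = (\<Sum>k<N. K k)" for N
    unfolding fN_def integral_restrict_Int set_eq using HI by (rule integral_unique)
  have gle: "norm (g x) \<le> h x" if "x \<in> {0..}" for x
  proof -
    have "norm (g x) = \<bar>pbernpoly p x\<bar> * norm ((of_real x + z) powr e)"
      unfolding g_def by (simp add: norm_mult)
    also have "\<dots> \<le> CB p * (exp (\<bar>Im e\<bar> * pi) * (x + Re z) powr Re e)"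
      using that z e by (intro mult_mono pbernpoly_bound norm_shift_powr_bound CB_nonneg) auto
    finally show ?thesis unfolding h_def C_def by (simp add: mult.assoc)
  qed
  have le: "norm (fN N x) \<le> h x" if "x \<in> {0..}" for N x
  proof -
    have "0 \<le> h x" using gle[OF that] norm_ge_zero order_trans by blast
    then show ?thesis using gle[OF that] unfolding fN_def by auto
  qed
  have conv: "(\<lambda>N. fN N x) \<longlonglongrightarrow> g x" if "x \<in> {0..}" for x
  proof (rule tendsto_eventually)
    show "\<forall>\<^sub>F N in sequentially. fN N x = g x"
    proof (rule eventually_sequentiallyI[of "nat \<lceil>x\<rceil>"])
      fix N assume "nat \<lceil>x\<rceil> \<le> N"
      then have "\<lceil>x\<rceil> \<le> int N" by (simp add: nat_le_iff)
      then have "x \<le> real N" by (simp add: ceiling_le_iff)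
      then show "fN N x = g x" unfolding fN_def by auto
    qed
  qed
  note dc = dominated_convergence[of fN "{0..}" h g, OF fNint hint le conv]
  show "g integrable_on {0..}" by (rule dc(1))
  show "K sums integral {0..} g"
    unfolding sums_def using dc(2) fNintegral by simp
qed



lemma Kf_deriv:
  fixes z e :: complex and k p :: nat
  assumes z: "Re z > 0" and e: "Re e < -1"
  shows "((\<lambda>e. integral {0..1} (\<lambda>t. of_real (bernpoly p t) * (of_real t + (of_nat k + z)) powr e))
     has_field_derivative
      integral {0..1} (\<lambda>t. of_real (bernpoly p t) * (Ln (of_real t + (of_nat k + z)) * (of_real t + (of_nat k + z)) powr e)))
     (at e)"
proof -
  define S where "S = {e::complex. Re e < -1}"
  have S: "open S" "convex S" "e \<in> S" using e unfolding S_def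
    by (auto simp: open_halfspace_Re_lt convex_halfspace_Re_lt)
  have ne: "of_real t + (of_nat k + z) \<noteq> 0" if "t \<ge> 0" for t :: real
    using z that by (auto simp: complex_eq_iff)
  have np: "of_real t + (of_nat k + z) \<notin> \<real>\<^sub>\<le>\<^sub>0" if "t \<ge> 0" for t :: real
    using z that by (auto simp: nonpos_Reals_def complex_eq_iff)
  have "((\<lambda>e. integral (cbox 0 1) (\<lambda>t. of_real (bernpoly p t) * (of_real t + (of_nat k + z)) powr e))
     has_field_derivative
      integral (cbox 0 1) (\<lambda>t. of_real (bernpoly p t) * (Ln (of_real t + (of_nat k + z)) * (of_real t + (of_nat k + z)) powr e)))
     (at e within S)"
  proof (rule leibniz_rule_field_derivative[OF _ _ _ S(3) S(2)])
    fix x :: complex and t :: real assume "x \<in> S" "t \<in> cbox 0 1"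
    then have "t \<ge> 0" by (simp add: cbox_interval)
    show "((\<lambda>x. of_real (bernpoly p t) * (of_real t + (of_nat k + z)) powr x) has_field_derivative
        of_real (bernpoly p t) * (Ln (of_real t + (of_nat k + z)) * (of_real t + (of_nat k + z)) powr x)) (at x within S)"
      by (rule has_field_derivative_at_within, rule DERIV_cmult, rule has_field_derivative_powr_right, rule ne, fact)
  next
    fix x :: complex assume "x \<in> S"
    show "(\<lambda>t. of_real (bernpoly p t) * (of_real t + (of_nat k + z)) powr x) integrable_on cbox 0 1"
      unfolding cbox_interval using z
      by (intro integrable_continuous_interval continuous_intros cont_bernpoly cont_shift_powr) auto
  next
    show "continuous_on (S \<times> cbox 0 1)
      (\<lambda>(x, t). of_real (bernpoly p t) * (Ln (of_real t + (of_nat k + z)) * (of_real t + (of_nat k + z)) powr x))"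
    proof -
      have c1: "continuous_on (S \<times> cbox 0 1) (\<lambda>y::complex\<times>real. of_real (bernpoly p (snd y)) :: complex)"
        using continuous_on_compose2[OF cont_bernpoly[of UNIV p] continuous_on_snd[OF continuous_on_id], of "S \<times> cbox 0 1"] by simp
      have c2: "continuous_on (S \<times> cbox 0 1) (\<lambda>y::complex\<times>real. Ln (of_real (snd y) + (of_nat k + z)))"
        by (intro continuous_on_Ln' continuous_on_add continuous_on_of_real continuous_on_snd continuous_on_id continuous_on_const np)
           (auto simp: cbox_interval)
      have c3: "continuous_on (S \<times> cbox 0 1) (\<lambda>y::complex\<times>real. (of_real (snd y) + (of_nat k + z)) powr (fst y))"
      proof (rule continuous_on_powr_complex)
        show "S \<times> cbox 0 1 \<subseteq> {y. 0 \<le> Re (of_real (snd y) + (of_nat k + z)) \<or> Im (of_real (snd y) + (of_nat k + z)) \<noteq> 0}"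
          using z by (auto simp: cbox_interval)
        show "\<And>y. y \<in> S \<times> cbox 0 1 \<Longrightarrow> of_real (snd y) + (of_nat k + z) = 0 \<Longrightarrow> 0 < Re (fst y)"
          using ne by (auto simp: cbox_interval)
      next
        show "continuous_on (S \<times> cbox 0 1) (\<lambda>y::complex\<times>real. of_real (snd y) + (of_nat k + z))"
          by (intro continuous_on_add continuous_on_of_real continuous_on_snd continuous_on_id continuous_on_const)
        show "continuous_on (S \<times> cbox 0 1) (\<lambda>y::complex\<times>real. fst y)"
          by (intro continuous_on_fst continuous_on_id)
      qed
      have "continuous_on (S \<times> cbox 0 1) (\<lambda>y::complex\<times>real. of_real (bernpoly p (snd y)) *
              (Ln (of_real (snd y) + (of_nat k + z)) * (of_real (snd y) + (of_nat k + z)) powr (fst y)))"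
        by (intro continuous_on_mult c1 c2 c3)
      then show ?thesis by (simp add: case_prod_beta)
    qed
  qed
  then show ?thesis using at_within_open[OF S(3) S(1)] by (simp add: cbox_interval)
qed

lemma Kf_bound:
  fixes z y :: complex and k p :: nat and \<sigma> E :: real
  assumes z: "Re z > 0" and k: "k \<ge> 1" and y: "Re y \<le> \<sigma>" "\<sigma> \<le> 0" "\<bar>Im y\<bar> \<le> E"
  shows "norm (integral {0..1} (\<lambda>t. of_real (bernpoly p t) * (of_real t + (of_nat k + z)) powr y))
           \<le> CB p * exp (E * pi) * real k powr \<sigma>"
proof -
  have bnd: "norm (of_real (bernpoly p t) * (of_real t + (of_nat k + z)) powr y) \<le> CB p * exp (E * pi) * real k powr \<sigma>"
    if t: "t \<in> cbox 0 1" for t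
  proof -
    from t have t01: "0 \<le> t" "t \<le> 1" by (auto simp: cbox_interval)
    define X where "X = of_real t + (of_nat k + z)"
    have "real k \<le> norm X"
      using complex_Re_le_cmod[of X] t01 z unfolding X_def by simp
    have k1: "1 \<le> real k" using k by simp
    have "norm (X powr y) \<le> exp (\<bar>Im y\<bar> * pi) * norm X powr Re y" by (rule norm_powr_bound)
    also have "\<dots> \<le> exp (E * pi) * real k powr \<sigma>"
    proof (rule mult_mono)
      show "exp (\<bar>Im y\<bar> * pi) \<le> exp (E * pi)" using y by simp
      have "norm X powr Re y \<le> norm X powr \<sigma>"
        using y \<open>real k \<le> norm X\<close> k1 by (intro powr_mono) auto
      also have "\<dots> \<le> real k powr \<sigma>"
        using y \<open>real k \<le> norm X\<close> k1 by (intro powr_mono2') auto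
      finally show "norm X powr Re y \<le> real k powr \<sigma>" .
    qed auto
    finally have "norm (X powr y) \<le> exp (E * pi) * real k powr \<sigma>" .
    then have "norm (of_real (bernpoly p t) * X powr y) \<le> CB p * (exp (E * pi) * real k powr \<sigma>)"
      unfolding norm_mult using bernpoly_bound[OF t01, of p]
      by (intro mult_mono) auto
    then show ?thesis unfolding X_def by (simp add: mult.assoc)
  qed
  have int: "((\<lambda>t. of_real (bernpoly p t) * (of_real t + (of_nat k + z)) powr y) has_integral
         integral {0..1} (\<lambda>t. of_real (bernpoly p t) * (of_real t + (of_nat k + z)) powr y)) (cbox 0 1)"
    unfolding cbox_interval using z
    by (intro integrable_integral integrable_continuous_interval continuous_intros cont_bernpoly cont_shift_powr) auto
  have B0: "0 \<le> CB p * exp (E * pi) * real k powr \<sigma>" using CB_nonneg[of p] by simp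
  from has_integral_bound[OF B0 int bnd] show ?thesis by (simp add: cbox_interval)
qed



lemma HOLO:
  fixes z :: complex and p :: nat
  assumes z: "Re z > 0"
  shows "(\<lambda>e. integral {0..} (\<lambda>x. of_real (pbernpoly p x) * (of_real x + z) powr e)) holomorphic_on {e. Re e < -1}"
proof -
  define S where "S = {e::complex. Re e < -1}"
  have oS: "open S" unfolding S_def by (simp add: open_halfspace_Re_lt)
  define Kf where "Kf = (\<lambda>k e. integral {0..1} (\<lambda>t. of_real (bernpoly p t) * (of_real t + (of_nat k + z)) powr e))"
  define Kf' where "Kf' = (\<lambda>k e. integral {0..1} (\<lambda>t. of_real (bernpoly p t) *
      (Ln (of_real t + (of_nat k + z)) * (of_real t + (of_nat k + z)) powr e)))"
  define Iint where "Iint = (\<lambda>e. integral {0..} (\<lambda>x. of_real (pbernpoly p x) * (of_real x + z) powr e))"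
  have hfd: "\<And>n x. x \<in> S \<Longrightarrow> (Kf n has_field_derivative Kf' n x) (at x)"
    unfolding Kf_def Kf'_def S_def using Kf_deriv z by auto
  have to_g: "\<exists>d h. 0 < d \<and> summable h \<and> (\<forall>\<^sub>F n in sequentially. \<forall>y\<in>ball x d \<inter> S. norm (Kf n y) \<le> h n)"
    if x: "x \<in> S" for x
  proof -
    define d where "d = (-1 - Re x) / 2"
    define \<sigma> where "\<sigma> = Re x + d"
    define E where "E = \<bar>Im x\<bar> + d"
    have d0: "d > 0" and s1: "\<sigma> < -1" using x unfolding d_def \<sigma>_def S_def by (auto simp: field_simps)
    have sh: "summable (\<lambda>n. CB p * exp (E * pi) * real n powr \<sigma>)"
      using s1 by (intro summable_mult) (simp add: summable_real_powr_iff)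
    have ev: "\<forall>\<^sub>F n in sequentially. \<forall>y\<in>ball x d \<inter> S. norm (Kf n y) \<le> CB p * exp (E * pi) * real n powr \<sigma>"
    proof (rule eventually_sequentiallyI[of 1], intro ballI)
      fix n :: nat and y assume n: "1 \<le> n" and y: "y \<in> ball x d \<inter> S"
      then have "norm (x - y) < d" by (simp add: dist_norm)
      moreover have "\<bar>Re (x - y)\<bar> \<le> norm (x - y)" "\<bar>Im (x - y)\<bar> \<le> norm (x - y)"
        by (rule abs_Re_le_cmod, rule abs_Im_le_cmod)
      ultimately have "Re y \<le> \<sigma>" "\<bar>Im y\<bar> \<le> E"
        unfolding \<sigma>_def E_def by auto
      moreover have "\<sigma> \<le> 0" using s1 by simp
      ultimately show "norm (Kf n y) \<le> CB p * exp (E * pi) * real n powr \<sigma>"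
        unfolding Kf_def using Kf_bound[OF z n] by blast
    qed
    show ?thesis using d0 sh ev by blast
  qed
  obtain g g' where gg: "\<forall>x\<in>S. ((\<lambda>n. Kf n x) sums g x) \<and> ((\<lambda>n. Kf' n x) sums g' x) \<and> (g has_field_derivative g' x) (at x)"
    using series_and_derivative_comparison_local[OF oS hfd to_g] by blast
  have eq: "g x = Iint x" if "x \<in> S" for x
  proof -
    have "(\<lambda>n. Kf n x) sums Iint x"
      unfolding Kf_def Iint_def using INT(2)[OF z, of x p] that unfolding S_def by simp
    then show ?thesis using gg that sums_unique2 by blast
  qed
  have "Iint holomorphic_on S"
    unfolding holomorphic_on_open[OF oS]
  proof
    fix x assume x: "x \<in> S"
    have "(Iint has_field_derivative g' x) (at x)"
      using has_field_derivative_transform_within_open[of g "g' x" x S Iint] gg x oS eq by blast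
    then show "\<exists>f'. (Iint has_field_derivative f') (at x)" by blast
  qed
  then show ?thesis unfolding Iint_def S_def .
qed



definition hz :: "complex \<Rightarrow> complex \<Rightarrow> complex" where
  "hz z w = (\<Sum>n. (of_nat n + z) powr (- w))"

lemma shift_powr_le_nat:
  fixes z q :: complex and n :: nat
  assumes z: "Re z > 0" and n: "n \<ge> 1" and q: "Re q \<le> 0"
  shows "norm ((of_nat n + z) powr q) \<le> exp (\<bar>Im q\<bar> * pi) * real n powr Re q"
proof -
  have "real n \<le> norm (of_nat n + z)"
    using complex_Re_le_cmod[of "of_nat n + z"] z by simp
  then have "norm (of_nat n + z) powr Re q \<le> real n powr Re q"
    using n q by (intro powr_mono2') auto
  then show ?thesis
    using norm_powr_bound[of "of_nat n + z" q] by (meson exp_ge_zero mult_left_mono order_trans)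
qed

lemma summable_hz:
  fixes z w :: complex
  assumes z: "Re z > 0" and w: "Re w > 1"
  shows "summable (\<lambda>n. norm ((of_nat n + z) powr (- w)))"
proof (rule summable_comparison_test_ev)
  show "\<forall>\<^sub>F n in sequentially. norm (norm ((of_nat n + z) powr (- w))) \<le> exp (\<bar>Im (- w)\<bar> * pi) * real n powr Re (- w)"
    using shift_powr_le_nat[OF z _, of _ "- w"] w by (intro eventually_sequentiallyI[of 1]) auto
  show "summable (\<lambda>n. exp (\<bar>Im (- w)\<bar> * pi) * real n powr Re (- w))"
    using w by (intro summable_mult) (simp add: summable_real_powr_iff)
qed

lemma lim0:
  fixes z q :: complex
  assumes z: "Re z > 0" and q: "Re q < 0"
  shows "(\<lambda>N. (of_nat N + z) powr q) \<longlonglongrightarrow> 0"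
proof (rule Lim_null_comparison)
  show "\<forall>\<^sub>F N in sequentially. norm ((of_nat N + z) powr q) \<le> exp (\<bar>Im q\<bar> * pi) * real N powr Re q"
    using shift_powr_le_nat[OF z _, of _ q] q by (intro eventually_sequentiallyI[of 1]) auto
  have "(\<lambda>N. real N powr Re q) \<longlonglongrightarrow> 0"
    using q by (intro tendsto_neg_powr filterlim_real_sequentially)
  then show "(\<lambda>N. exp (\<bar>Im q\<bar> * pi) * real N powr Re q) \<longlonglongrightarrow> 0"
    by (rule tendsto_mult_right_zero)
qed

lemma EM_finite:
  fixes z w :: complex and p N :: nat
  assumes z: "Re z > 0" and w: "w \<noteq> 1" and p: "p \<ge> 1"
  shows "(\<Sum>n<Suc N. (of_nat n + z) powr (- w)) = z powr (- w) + Gf p w z - Gf p w (of_nat N + z)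
           - (\<Sum>k<N. integral {0..1} (\<lambda>t. Tt p w (of_nat k + z) (of_real t)))"
proof (induction N)
  case 0
  then show ?case by simp
next
  case (Suc N)
  have "Re (of_nat N + z) > 0" using z by simp
  from integral_unique[OF Phi_integral[OF this w, of p]]
  have "integral {0..1} (\<lambda>t. Tt p w (of_nat N + z) (of_real t))
     = Gf p w (of_nat N + z) - Gf p w (of_nat (Suc N) + z) - (of_nat (Suc N) + z) powr (- w)"
    unfolding Phi_0 Phi_1[OF p] by (simp add: add.assoc)
  then show ?case using Suc by simp
qed

lemma Tt_of_real: "Tt p w a (of_real t) = pochhammer w p / fact p * (of_real (bernpoly p t) * (of_real t + a) powr (- w - of_nat p))"
  by (simp add: Tt_def cbp_of_real)

lemma bernoulli_1: "bernoulli 1 = - 1 / 2"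
  by (simp add: numeral_2_eq_2)

lemma alg:
  fixes w H A S B C :: complex
  assumes "w \<noteq> 1" "H = A + (- 1 / 2 * A + S - B / (1 - w)) - 0 - C"
  shows "H = B / (w - 1) + 1 / 2 * A + S - C"
proof -
  have "1 - w \<noteq> 0" "w - 1 \<noteq> 0" using assms(1) by auto
  then show ?thesis using assms(2) by (simp add: field_simps)
qed

lemma EM:
  fixes z w :: complex and m :: nat
  assumes z: "Re z > 0" and w: "Re w > 1"
  shows "hz z w = z powr (1 - w) / (w - 1) + 1 / 2 * z powr (- w)
     + (\<Sum>k=1..m. of_real (bernoulli (k + 1) / fact (k + 1)) * pochhammer w k * z powr (- w - of_nat k))
     - pochhammer w (Suc m) / fact (Suc m) *
        integral {0..} (\<lambda>x. of_real (pbernpoly (Suc m) x) * (of_real x + z) powr (- w - of_nat (Suc m)))"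
proof -
  define p where "p = Suc m"
  have p: "p \<ge> 1" unfolding p_def by simp
  have w1: "w \<noteq> 1" using w by auto
  define e where "e = - w - of_nat p"
  have e: "Re e < -1" unfolding e_def using w by simp
  define c where "c = pochhammer w p / fact p"
  define Iint where "Iint = integral {0..} (\<lambda>x. of_real (pbernpoly p x) * (of_real x + z) powr e)"
  define Kf where "Kf = (\<lambda>k. integral {0..1} (\<lambda>t. of_real (bernpoly p t) * (of_real t + (of_nat k + z)) powr e))"
  have Kf_sums: "Kf sums Iint" unfolding Kf_def Iint_def using INT(2)[OF z e] by simp
  have Tint: "integral {0..1} (\<lambda>t. Tt p w (of_nat k + z) (of_real t)) = c * Kf k" for k
    unfolding Tt_of_real Kf_def c_def e_def by simp
  have lhs: "(\<lambda>N. \<Sum>n<Suc N. (of_nat n + z) powr (- w)) \<longlonglongrightarrow> hz z w"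
  proof -
    have "summable (\<lambda>n. (of_nat n + z) powr (- w))"
      by (rule summable_norm_cancel[OF summable_hz[OF z w]])
    then have "(\<lambda>N. \<Sum>n<N. (of_nat n + z) powr (- w)) \<longlonglongrightarrow> hz z w"
      unfolding hz_def by (simp add: summable_LIMSEQ)
    then show ?thesis by (rule LIMSEQ_Suc)
  qed
  have G0: "(\<lambda>N. Gf p w (of_nat N + z)) \<longlonglongrightarrow> 0"
  proof -
    have "(\<lambda>N. Gf p w (of_nat N + z)) \<longlonglongrightarrow>
       (\<Sum>j<p. of_real (bernoulli (Suc j)) / fact (Suc j) * pochhammer w j * 0) - 0 / (1 - w)"
      unfolding Gf_def
      by (intro tendsto_intros lim0[OF z]) (use w in auto)
    then show ?thesis by simp
  qed
  have rhs: "(\<lambda>N. z powr (- w) + Gf p w z - Gf p w (of_nat N + z)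
           - (\<Sum>k<N. integral {0..1} (\<lambda>t. Tt p w (of_nat k + z) (of_real t))))
       \<longlonglongrightarrow> z powr (- w) + Gf p w z - 0 - c * Iint"
  proof -
    have "(\<lambda>N. \<Sum>k<N. Kf k) \<longlonglongrightarrow> Iint" using Kf_sums by (simp add: sums_def)
    then have "(\<lambda>N. c * (\<Sum>k<N. Kf k)) \<longlonglongrightarrow> c * Iint" by (rule tendsto_mult_left)
    then have "(\<lambda>N. \<Sum>k<N. integral {0..1} (\<lambda>t. Tt p w (of_nat k + z) (of_real t))) \<longlonglongrightarrow> c * Iint"
      by (simp add: Tint sum_distrib_left)
    then show ?thesis by (intro tendsto_intros G0)
  qed
  have main: "hz z w = z powr (- w) + Gf p w z - 0 - c * Iint"
    using LIMSEQ_unique[OF lhs rhs[unfolded EM_finite[OF z w1 p, symmetric]]] .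
  have Gz: "Gf p w z = - 1 / 2 * z powr (- w)
      + (\<Sum>k=1..m. of_real (bernoulli (k + 1) / fact (k + 1)) * pochhammer w k * z powr (- w - of_nat k))
      - z powr (1 - w) / (1 - w)"
  proof -
    have "(\<Sum>j<p. of_real (bernoulli (Suc j)) / fact (Suc j) * pochhammer w j * z powr (- w - of_nat j))
       = of_real (bernoulli 1) * z powr (- w)
         + (\<Sum>k<m. of_real (bernoulli (Suc (Suc k))) / fact (Suc (Suc k)) * pochhammer w (Suc k) * z powr (- w - of_nat (Suc k)))"
      unfolding p_def by (subst sum.lessThan_Suc_shift) simp
    also have "(\<Sum>k<m. of_real (bernoulli (Suc (Suc k))) / fact (Suc (Suc k)) * pochhammer w (Suc k) * z powr (- w - of_nat (Suc k)))
        = (\<Sum>k=1..m. of_real (bernoulli (k + 1) / fact (k + 1)) * pochhammer w k * z powr (- w - of_nat k))"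
      unfolding One_nat_def sum.atLeast1_atMost_eq by simp
    finally show ?thesis unfolding Gf_def bernoulli_1 by simp
  qed
  have "hz z w = z powr (1 - w) / (w - 1) + 1 / 2 * z powr (- w)
     + (\<Sum>k=1..m. of_real (bernoulli (k + 1) / fact (k + 1)) * pochhammer w k * z powr (- w - of_nat k))
     - c * Iint"
    using alg[OF w1 main[unfolded Gz]] .
  then show ?thesis unfolding c_def Iint_def e_def p_def .
qed



lemma sum_swap_tri:
  fixes q :: nat
  shows "(\<Sum>j\<le>q. \<Sum>l\<le>j. f j l) = (\<Sum>l\<le>q. \<Sum>j=l..q. f j l :: 'a :: comm_monoid_add)"
proof (induction q)
  case 0 then show ?case by simp
next
  case (Suc q)
  have "(\<Sum>l\<le>Suc q. \<Sum>j=l..Suc q. f j l) = (\<Sum>l\<le>q. \<Sum>j=l..Suc q. f j l) + f (Suc q) (Suc q)"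
    by simp
  also have "(\<Sum>l\<le>q. \<Sum>j=l..Suc q. f j l) = (\<Sum>l\<le>q. (\<Sum>j=l..q. f j l) + f (Suc q) l)"
    by (intro sum.cong refl) (simp add: sum.cl_ivl_Suc)
  also have "\<dots> = (\<Sum>l\<le>q. \<Sum>j=l..q. f j l) + (\<Sum>l\<le>q. f (Suc q) l)"
    by (simp add: sum.distrib)
  finally show ?case using Suc by (simp add: add.assoc)
qed

lemma poch_stirling:
  fixes x :: complex
  shows "pochhammer (x + 1) q = (\<Sum>j\<le>q. of_nat (stirling (Suc q) (Suc j)) * x ^ j)"
proof (cases "x = 0")
  case True
  have "(\<Sum>j\<le>q. of_nat (stirling (Suc q) (Suc j)) * x ^ j) = (\<Sum>j\<le>q. if j = 0 then of_nat (fact q) else 0)"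
    using True by (intro sum.cong refl) (auto simp del: stirling.simps simp: stirling_Suc_n_1)
  also have "\<dots> = fact q" by simp
  finally show ?thesis using True by (simp add: pochhammer_fact)
next
  case False
  have "x * pochhammer (x + 1) q = pochhammer x (Suc q)" by (simp add: pochhammer_rec)
  also have "\<dots> = (\<Sum>k\<le>Suc q. of_nat (stirling (Suc q) k) * x ^ k)" by (simp add: stirling_pochhammer)
  also have "\<dots> = (\<Sum>j\<le>q. of_nat (stirling (Suc q) (Suc j)) * x ^ Suc j)"
    by (subst sum.atMost_Suc_shift) simp
  also have "\<dots> = x * (\<Sum>j\<le>q. of_nat (stirling (Suc q) (Suc j)) * x ^ j)"
    by (simp add: sum_distrib_left ac_simps)
  finally show ?thesis using False by simp
qed

lemma binom_P:
  fixes z :: complex and n r :: nat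
  assumes r: "r \<ge> 1"
  shows "(of_nat ((n + r - 1) choose n) :: complex) = (\<Sum>l<r. P_coef r l z * (of_nat n + z) ^ l)"
proof -
  define q where "q = r - 1"
  have rq: "r = Suc q" using r unfolding q_def by simp
  have "(of_nat ((n + r - 1) choose n) :: complex) = of_nat ((n + q) choose q)"
    unfolding rq by (simp add: binomial_symmetric[of q "n + q", simplified])
  also have "\<dots> = pochhammer (of_nat n + 1) q / fact q"
    by (simp add: binomial_gbinomial gbinomial_pochhammer')
  also have "pochhammer (of_nat n + 1) q = (\<Sum>j\<le>q. of_nat (stirling r (Suc j)) * (of_nat n :: complex) ^ j)"
    unfolding rq by (rule poch_stirling)
  also have "\<dots> = (\<Sum>j\<le>q. \<Sum>l\<le>j. of_nat (stirling r (Suc j)) * (of_nat (j choose l) * (of_nat n + z) ^ l * (- z) ^ (j - l)))"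
  proof (intro sum.cong refl)
    fix j
    have "(of_nat n :: complex) ^ j = ((of_nat n + z) + (- z)) ^ j" by simp
    also have "\<dots> = (\<Sum>l\<le>j. of_nat (j choose l) * (of_nat n + z) ^ l * (- z) ^ (j - l))"
      by (rule binomial_ring)
    finally show "of_nat (stirling r (Suc j)) * (of_nat n :: complex) ^ j =
        (\<Sum>l\<le>j. of_nat (stirling r (Suc j)) * (of_nat (j choose l) * (of_nat n + z) ^ l * (- z) ^ (j - l)))"
      by (simp add: sum_distrib_left)
  qed
  also have "\<dots> = (\<Sum>l\<le>q. \<Sum>j=l..q. of_nat (stirling r (Suc j)) * (of_nat (j choose l) * (of_nat n + z) ^ l * (- z) ^ (j - l)))"
    by (rule sum_swap_tri)
  also have "\<dots> / fact q = (\<Sum>l<r. P_coef r l z * (of_nat n + z) ^ l)"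
    unfolding P_coef_def rq
    by (simp del: stirling.simps add: lessThan_Suc_atMost sum_divide_distrib sum_distrib_right sum_distrib_left ac_simps)
  finally show ?thesis .
qed



lemma barnes:
  fixes z s :: complex and r :: nat
  assumes r: "r \<ge> 1" and z: "Re z > 0" and s: "Re s > real r"
  shows "barnes_zeta r s z = (\<Sum>l<r. P_coef r l z * hz z (s - of_nat l))"
proof -
  define A where "A = {ns::nat list. length ns = r}"
  define B where "B = (\<lambda>n. {ns::nat list. length ns = r \<and> sum_list ns = n})"
  define gg where "gg = (\<lambda>ns::nat list. (of_nat (sum_list ns) + z) powr (- s))"
  define F where "F = (\<lambda>x::nat \<times> nat list. gg (snd x))"
  define X where "X = (\<lambda>l n. (of_nat n + z) powr (- (s - of_nat l)))"
  have finB: "finite (B n)" for n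
  proof (rule finite_subset)
    show "B n \<subseteq> {xs. set xs \<subseteq> {0..n} \<and> length xs = r}"
      unfolding B_def using member_le_sum_list by fastforce
    show "finite {xs. set xs \<subseteq> {0..n} \<and> length xs = r}"
      by (rule finite_lists_length_eq) simp
  qed
  have cardB: "card (B n) = (n + r - 1) choose n" for n
    unfolding B_def using card_length_sum_list[of r n] by simp
  have ne: "of_nat n + z \<noteq> 0" for n using z by (auto simp: complex_eq_iff)
  have sumB: "sum gg (B n) = of_nat ((n + r - 1) choose n) * (of_nat n + z) powr (- s)" for n
  proof -
    have "sum gg (B n) = sum (\<lambda>_. (of_nat n + z) powr (- s)) (B n)"
      unfolding gg_def B_def by (intro sum.cong refl) auto
    then show ?thesis by (simp add: cardB)
  qed
  have ident: "sum gg (B n) = (\<Sum>l<r. P_coef r l z * X l n)" for n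
  proof -
    have "sum gg (B n) = (\<Sum>l<r. P_coef r l z * ((of_nat n + z) ^ l * (of_nat n + z) powr (- s)))"
      unfolding sumB binom_P[OF r, of n z] sum_distrib_right by (simp add: ac_simps)
    also have "\<dots> = (\<Sum>l<r. P_coef r l z * X l n)"
    proof (intro sum.cong refl)
      fix l
      have "(of_nat n + z) powr (- (s - of_nat l)) = (of_nat n + z) powr (of_nat l) * (of_nat n + z) powr (- s)"
        by (simp add: powr_add[symmetric])
      also have "(of_nat n + z) powr (of_nat l) = (of_nat n + z) ^ l"
        using ne by (simp add: powr_nat')
      finally show "P_coef r l z * ((of_nat n + z) ^ l * (of_nat n + z) powr (- s)) = P_coef r l z * X l n"
        unfolding X_def by simp
    qed
    finally show ?thesis .
  qed
  have summX: "summable (\<lambda>n. norm (X l n))" if "l < r" for l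
    unfolding X_def using that s by (intro summable_hz z) auto
  have summX': "summable (X l)" if "l < r" for l
    using summable_norm_cancel[OF summX[OF that]] .
  have normsum: "summable (\<lambda>n. norm (sum gg (B n)))"
  proof (rule summable_comparison_test')
    show "summable (\<lambda>n. \<Sum>l<r. norm (P_coef r l z) * norm (X l n))"
      by (intro summable_sum summable_mult summX) auto
    fix n :: nat
    have "norm (sum gg (B n)) \<le> (\<Sum>l<r. norm (P_coef r l z * X l n))"
      unfolding ident by (rule norm_sum)
    then show "norm (norm (sum gg (B n))) \<le> (\<Sum>l<r. norm (P_coef r l z) * norm (X l n))"
      by (simp add: norm_mult)
  qed
  have bij: "bij_betw (\<lambda>ns. (sum_list ns, ns)) A (Sigma UNIV B)"
    unfolding bij_betw_def A_def B_def by (auto simp: inj_on_def image_iff)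
  have normB: "infsum (\<lambda>y. norm (F (n, y))) (B n) = norm (sum gg (B n))" for n
  proof -
    have "infsum (\<lambda>y. norm (F (n, y))) (B n) = sum (\<lambda>y. norm (gg y)) (B n)"
      using finB[of n] unfolding F_def by simp
    also have "\<dots> = sum (\<lambda>_. norm ((of_nat n + z) powr (- s))) (B n)"
      unfolding gg_def B_def by (intro sum.cong refl) auto
    also have "\<dots> = norm (sum gg (B n))"
      unfolding sumB by (simp add: norm_mult cardB)
    finally show ?thesis .
  qed
  have Fsum: "F summable_on Sigma UNIV B"
  proof (rule abs_summable_summable)
    show "(\<lambda>x. norm (F x)) summable_on Sigma UNIV B"
    proof (rule iffD2[OF Infinite_Sum.abs_summable_on_Sigma_iff], intro conjI ballI)
      fix n :: nat
      show "(\<lambda>y. norm (F (n, y))) summable_on B n" using finB[of n] by simp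
    next
      have "(\<lambda>n. norm (sum gg (B n))) summable_on UNIV"
        using normsum by (intro norm_summable_imp_summable_on) simp
      then show "(\<lambda>x. norm (infsum (\<lambda>y. norm (F (x, y))) (B x))) summable_on UNIV"
        unfolding normB by simp
    qed
  qed
  have "barnes_zeta r s z = infsum gg A"
    unfolding barnes_zeta_def A_def gg_def ..
  also have "\<dots> = infsum F (Sigma UNIV B)"
    using infsum_reindex_bij_betw[OF bij, of F] unfolding F_def by simp
  also have "\<dots> = infsum (\<lambda>n. infsum (\<lambda>y. F (n, y)) (B n)) UNIV"
    by (rule infsum_Sigma_banach[OF Fsum, symmetric])
  also have "\<dots> = infsum (\<lambda>n. sum gg (B n)) UNIV"
    using finB unfolding F_def by simp
  also have "\<dots> = suminf (\<lambda>n. sum gg (B n))"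
    by (intro infsumI norm_summable_imp_has_sum normsum summable_sums summable_norm_cancel)
  also have "\<dots> = suminf (\<lambda>n. \<Sum>l<r. P_coef r l z * X l n)"
    unfolding ident ..
  also have "\<dots> = (\<Sum>l<r. suminf (\<lambda>n. P_coef r l z * X l n))"
    by (intro suminf_sum summable_mult summX') auto
  also have "\<dots> = (\<Sum>l<r. P_coef r l z * hz z (s - of_nat l))"
  proof (intro sum.cong refl)
    fix l assume "l \<in> {..<r}"
    then have "suminf (\<lambda>n. P_coef r l z * X l n) = P_coef r l z * suminf (X l)"
      by (intro suminf_mult summX') auto
    then show "suminf (\<lambda>n. P_coef r l z * X l n) = P_coef r l z * hz z (s - of_nat l)"
      unfolding hz_def X_def by simp
  qed
  finally show ?thesis .
qed



lemma holomorphic_on_pochhammer [holomorphic_intros]: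
  assumes "f holomorphic_on A"
  shows "(\<lambda>s. pochhammer (f s) n) holomorphic_on A"
  unfolding pochhammer_prod by (intro holomorphic_intros assms)

lemma hol_int:
  fixes z :: complex
  assumes z: "Re z > 0" and g: "g holomorphic_on A" and gA: "\<And>s. s \<in> A \<Longrightarrow> Re (g s) < -1"
  shows "(\<lambda>s. integral {0..} (\<lambda>x. of_real (pbernpoly p x) * (of_real x + z) powr g s)) holomorphic_on A"
proof -
  have "((\<lambda>e. integral {0..} (\<lambda>x. of_real (pbernpoly p x) * (of_real x + z) powr e)) \<circ> g) holomorphic_on A"
    by (rule holomorphic_on_compose_gen[OF g HOLO[OF z]]) (use gA in auto)
  then show ?thesis by (simp add: o_def)
qed

lemma sum_alg:
  fixes P a b c d :: "nat \<Rightarrow> complex"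
  shows "(\<Sum>l<r. P l * (a l + 1/2 * b l + c l - d l)) =
     (\<Sum>l<r. P l * a l) + 1/2 * (\<Sum>l<r. P l * b l) + (\<Sum>l<r. P l * c l) - (\<Sum>l<r. P l * d l)"
  by (simp add: algebra_simps sum.distrib sum_subtractf sum_distrib_left)

lemma sum_alg2:
  fixes P A Q B C R T D :: "nat \<Rightarrow> complex"
  shows "(\<Sum>l<r. P l * (A l / Q l + 1/2 * B l + C l - R l / T l * D l)) =
     (\<Sum>l<r. P l / Q l * A l) + 1/2 * (\<Sum>l<r. P l * B l) + (\<Sum>l<r. P l * C l) - (\<Sum>l<r. P l * R l / T l * D l)"
  by (simp add: algebra_simps sum.distrib sum_subtractf sum_distrib_left)

theorem proposition3p1:
  fixes r :: nat and z :: complex and Ms :: "nat \<Rightarrow> nat"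
  assumes r: "r \<ge> 1" and z: "Re z > 0"
  defines "M \<equiv> Max {real l - real (Ms l) | l. l < r}"
  defines "F \<equiv> (\<lambda>s::complex.
      (\<Sum>l<r. P_coef r l z / (s - of_nat l - 1) * z powr (- s + of_nat l + 1))
    + (1/2) * (\<Sum>l<r. P_coef r l z * z powr (- s + of_nat l))
    + (\<Sum>l<r. P_coef r l z *
         (\<Sum>k=1..Ms l. of_real (bernoulli (k + 1) / fact (k + 1)) *
                         pochhammer (s - of_nat l) k * z powr (- s + of_nat l - of_nat k)))
    - (\<Sum>l<r. P_coef r l z * pochhammer (s - of_nat l) (Ms l + 1) / fact (Ms l + 1) *
         integral {0..} (\<lambda>x::real. of_real (pbernpoly (Ms l + 1) x) *
            (of_real x + z) powr (- s + of_nat l - of_nat (Ms l) - 1))))"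
  shows "(\<forall>s. Re s > real r \<longrightarrow> barnes_zeta r s z = F s)
       \<and> (\<forall>s l. Re s > M \<and> l < r \<longrightarrow>
            (\<lambda>x::real. of_real (pbernpoly (Ms l + 1) x) *
               (of_real x + z) powr (- s + of_nat l - of_nat (Ms l) - 1)) integrable_on {0..})
       \<and> F holomorphic_on ({s. Re s > M} - of_nat ` {1..r})"
proof (intro conjI allI impI)
  have Mset: "{real l - real (Ms l) | l. l < r} = (\<lambda>l. real l - real (Ms l)) ` {..<r}" by auto
  have Mge: "real l - real (Ms l) \<le> M" if "l < r" for l
    unfolding M_def Mset using that by (intro Max_ge) auto
  have Re_exp: "Re (- s + of_nat l - of_nat (Ms l) - 1) < -1" if "Re s > M" "l < r" for s l
    using Mge[OF that(2)] that(1) by simp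
  fix s :: complex and l :: nat
  assume sl: "M < Re s \<and> l < r"
  show "(\<lambda>x::real. of_real (pbernpoly (Ms l + 1) x) *
               (of_real x + z) powr (- s + of_nat l - of_nat (Ms l) - 1)) integrable_on {0..}"
    using INT(1)[OF z Re_exp, of s l "Ms l + 1"] sl by blast
next
  have Mset: "{real l - real (Ms l) | l. l < r} = (\<lambda>l. real l - real (Ms l)) ` {..<r}" by auto
  have Mge: "real l - real (Ms l) \<le> M" if "l < r" for l
    unfolding M_def Mset using that by (intro Max_ge) auto
  have Re_exp: "Re (- s + of_nat l - of_nat (Ms l) - 1) < -1" if "Re s > M" "l < r" for s l
    using Mge[OF that(2)] that(1) by simp
  define S where "S = {s. Re s > M} - of_nat ` {1..r}"
  have nz: "s - of_nat l - 1 \<noteq> 0" if "s \<in> S" "l < r" for s l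
  proof
    assume "s - of_nat l - 1 = 0"
    then have "s = of_nat (Suc l)" by (simp add: algebra_simps)
    moreover have "Suc l \<in> {1..r}" using that(2) by simp
    ultimately show False using that(1) unfolding S_def by blast
  qed
  have nz': "False" if "s \<in> S" "l < r" "s - of_nat l = 1" for s l
    using nz[OF that(1,2)] that(3) by simp
  have one_ne: "False" if "1 + (of_nat n :: complex) = 0" for n
    using that by (metis of_nat_Suc of_nat_eq_0_iff nat.simps(3) add.commute)
  have Re_exp': "real l + (- Re s - real (Ms l)) < 0" if "M < Re s" "l < r" for s l
    using Mge[OF that(2)] that(1) by linarith
  show "F holomorphic_on ({s. Re s > M} - of_nat ` {1..r})"
    unfolding F_def S_def[symmetric]
  proof (intro holomorphic_intros hol_int[OF z])
    fix l s assume ls: "l \<in> {..<r}" "s \<in> S"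
    show "s - of_nat l - 1 \<noteq> 0" using nz ls by simp
    show "(fact (Ms l + 1) :: complex) \<noteq> 0" by (rule fact_nonzero)
    show "Re (- s + of_nat l - of_nat (Ms l) - 1) < - 1"
      using Re_exp ls unfolding S_def by simp
  qed
next
  fix s :: complex
  assume s: "Re s > real r"
  have hzl: "hz z (s - of_nat l) =
      z powr (- s + of_nat l + 1) / (s - of_nat l - 1) + 1 / 2 * z powr (- s + of_nat l)
     + (\<Sum>k=1..Ms l. of_real (bernoulli (k + 1) / fact (k + 1)) * pochhammer (s - of_nat l) k * z powr (- s + of_nat l - of_nat k))
     - pochhammer (s - of_nat l) (Ms l + 1) / fact (Ms l + 1) *
        integral {0..} (\<lambda>x. of_real (pbernpoly (Ms l + 1) x) * (of_real x + z) powr (- s + of_nat l - of_nat (Ms l) - 1))"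
    if l: "l < r" for l
  proof -
    have w: "Re (s - of_nat l) > 1" using s l by simp
    have e1: "1 - (s - of_nat l) = - s + of_nat l + 1" by simp
    have e3: "- (s - of_nat l) = - s + of_nat l" by simp
    have e5: "- s + of_nat l - of_nat (Ms l + 1) = - s + of_nat l - of_nat (Ms l) - 1" by simp
    have e6: "Suc (Ms l) = Ms l + 1" by simp
    show ?thesis
      using EM[OF z w, of "Ms l"] by (simp only: e1 e3 e5 e6)
  qed
  have "barnes_zeta r s z = (\<Sum>l<r. P_coef r l z * hz z (s - of_nat l))"
    by (rule barnes[OF r z s])
  also have "\<dots> = (\<Sum>l<r. P_coef r l z * (
      z powr (- s + of_nat l + 1) / (s - of_nat l - 1) + 1 / 2 * z powr (- s + of_nat l)
     + (\<Sum>k=1..Ms l. of_real (bernoulli (k + 1) / fact (k + 1)) * pochhammer (s - of_nat l) k * z powr (- s + of_nat l - of_nat k))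
     - pochhammer (s - of_nat l) (Ms l + 1) / fact (Ms l + 1) *
        integral {0..} (\<lambda>x. of_real (pbernpoly (Ms l + 1) x) * (of_real x + z) powr (- s + of_nat l - of_nat (Ms l) - 1))))"
  proof (intro sum.cong refl)
    fix l assume "l \<in> {..<r}"
    then have "l < r" by simp
    then show "P_coef r l z * hz z (s - of_nat l) = P_coef r l z * (
      z powr (- s + of_nat l + 1) / (s - of_nat l - 1) + 1 / 2 * z powr (- s + of_nat l)
     + (\<Sum>k=1..Ms l. of_real (bernoulli (k + 1) / fact (k + 1)) * pochhammer (s - of_nat l) k * z powr (- s + of_nat l - of_nat k))
     - pochhammer (s - of_nat l) (Ms l + 1) / fact (Ms l + 1) *
        integral {0..} (\<lambda>x. of_real (pbernpoly (Ms l + 1) x) * (of_real x + z) powr (- s + of_nat l - of_nat (Ms l) - 1)))"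
      by (simp only: hzl)
  qed
  also have "\<dots> = F s"
    unfolding F_def by (rule sum_alg2)
  finally show "barnes_zeta r s z = F s" .
qed

end
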